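(* Let $S$ be an instance of Max $r(n)$-Lin-2 AA (with parameter $k$) in which no two equations have the same left-hand side, i.e. $\alpha_j\neq\alpha_p$ for all $j\neq p$. Suppose that some run of Algorithm $\mathcal{A}$ (defined in the context) on $S$ marks $k$ equations. Then $S$ is a YES-instance, i.e. there is an assignment of values in $\mathbb{F}_2$ to $z_1,\dots,z_n$ such that the total weight of satisfied equations is at least $(W+k)/2$.
   Context: Max $r(n)$-Lin-2 AA: for a fixed function $r(n)$, an instance is a system $S$ of $m$ linear equations over $\mathbb{F}_2$ in variables $z_1,\dots,z_n$, Equation $j$ being $\sum_{i\in\alpha_j} z_i=b_j$ with $\emptyset\neq\alpha_j\subseteq\{1,\dots,n\}$, $|\alpha_j|\le r=r(n)$, $b_j\in\mathbb{F}_2$, and a positive integer weight $w_j$; together with a nonnegative integer parameter $k$. It is assumed that every variable appears in at least one equation. Let $W=w_1+\cdots+w_m$. The instance is a YES-instance if some assignment satisfies equations of total weight at least $(W+k)/2$. Combining rule: if two equations $\sum_{i\in\alpha}z_i=b'$ (weight $w'$) and $\sum_{i\in\alpha}z_i=b''$ (weight $w''$) have the same left-hand side, replace them by one equation with that left-hand side: if $b'=b''$, with right-hand side $b'$ and weight $w'+w''$; otherwise, the one of larger weight, with new weight $|w'-w''|$; an equation of resulting weight $0$ is deleted. Algorithm $\mathcal{A}$: initially nothing is marked. While $S\neq\emptyset$ and fewer than $k$ equations are marked: (1) for each $i$ compute $\rho_i$, the number of equations currently in $S$ containing $z_i$; (2) choose a variable $z_l$ still occurring in $S$ with minimum $\rho_l$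 and mark it; (3) choose an arbitrary equation $\sum_{i\in\alpha}z_i=b$ of $S$ containing $z_l$; (4) mark this equation and delete it from $S$; (5) replace every other equation $\sum_{i\in\alpha'}z_i=b'$ of $S$ containing $z_l$ by $\sum_{i\in\alpha\triangle\alpha'}z_i=b+b'$ (keeping its weight), where $\triangle$ is symmetric difference; (6) apply the combining rule exhaustively (deleting equations of weight $0$). *)

theory Defs
  imports Complex_Main "HOL-Library.Multiset" "HOL-Library.Z2"
begin

text \<open>An equation  sum_{i in alpha} z_i = b  with weight w is the triple (alpha, b, w).
  Values in F_2 are of type bit (field of integers mod 2).\<close>

type_synonym equation = "nat set \<times> bit \<times> nat"

definition lhs :: "equation \<Rightarrow> nat set" where "lhs e = fst e"
definition rhs :: "equation \<Rightarrow> bit" where "rhs e = fst (snd e)"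
definition wt  :: "equation \<Rightarrow> nat" where "wt e = snd (snd e)"

definition satisfies :: "(nat \<Rightarrow> bit) \<Rightarrow> equation \<Rightarrow> bool" where
  "satisfies z e \<longleftrightarrow> (\<Sum>i\<in>lhs e. z i) = rhs e"

definition total_weight :: "equation list \<Rightarrow> nat" where
  "total_weight S = sum_list (map wt S)"

definition sat_weight :: "(nat \<Rightarrow> bit) \<Rightarrow> equation list \<Rightarrow> nat" where
  "sat_weight z S = sum_list (map (\<lambda>e. if satisfies z e then wt e else 0) S)"

definition lin2_instance :: "(nat \<Rightarrow> nat) \<Rightarrow> nat \<Rightarrow> equation list \<Rightarrow> bool" where
  "lin2_instance r n S \<longleftrightarrow>
     (\<forall>e\<in>set S. lhs e \<noteq> {} \<and> lhs e \<subseteq> {1..n} \<and> card (lhs e) \<le> r n \<and> wt e > 0) \<and>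
     (\<forall>i\<in>{1..n}. \<exists>e\<in>set S. i \<in> lhs e)"

definition yes_instance :: "equation list \<Rightarrow> nat \<Rightarrow> bool" where
  "yes_instance S k \<longleftrightarrow>
     (\<exists>z :: nat \<Rightarrow> bit. real (sat_weight z S) \<ge> (real (total_weight S) + real k) / 2)"

definition symdiff :: "'a set \<Rightarrow> 'a set \<Rightarrow> 'a set" where
  "symdiff A B = (A - B) \<union> (B - A)"

definition combine :: "equation \<Rightarrow> equation \<Rightarrow> equation multiset" where
  "combine e1 e2 =
     (if rhs e1 = rhs e2 then {# (lhs e1, rhs e1, wt e1 + wt e2) #}
      else if wt e1 > wt e2 then {# (lhs e1, rhs e1, wt e1 - wt e2) #}
      else if wt e2 > wt e1 then {# (lhs e1, rhs e2, wt e2 - wt e1) #}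
      else {#})"

definition comb_step :: "equation multiset \<Rightarrow> equation multiset \<Rightarrow> bool" where
  "comb_step S S' \<longleftrightarrow>
     (\<exists>e1 e2. {#e1, e2#} \<subseteq># S \<and> lhs e1 = lhs e2 \<and>
              S' = S - {#e1, e2#} + combine e1 e2)"

definition comb_exhaust :: "equation multiset \<Rightarrow> equation multiset \<Rightarrow> bool" where
  "comb_exhaust S S' \<longleftrightarrow> comb_step\<^sup>*\<^sup>* S S' \<and> \<not> (\<exists>S''. comb_step S' S'')"

definition vars :: "equation multiset \<Rightarrow> nat set" where
  "vars S = (\<Union>e\<in>set_mset S. lhs e)"

definition rho :: "equation multiset \<Rightarrow> nat \<Rightarrow> nat" where
  "rho S i = size (filter_mset (\<lambda>e. i \<in> lhs e) S)"

definition eliminate :: "nat \<Rightarrow> equation \<Rightarrow> equation \<Rightarrow> equation" where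
  "eliminate l e e' =
     (if l \<in> lhs e' then (symdiff (lhs e) (lhs e'), rhs e + rhs e', wt e') else e')"

text \<open>The state is the current system
  together with the number of marked equations (marked variables do not influence
  later steps: they no longer occur in the system).\<close>
definition alg_step :: "nat \<Rightarrow> equation multiset \<times> nat \<Rightarrow> equation multiset \<times> nat \<Rightarrow> bool" where
  "alg_step k st st' \<longleftrightarrow>
     (let S = fst st; c = snd st in
      S \<noteq> {#} \<and> c < k \<and>
      (\<exists>l e S3.
         l \<in> vars S \<and> (\<forall>i\<in>vars S. rho S l \<le> rho S i) \<and>
         e \<in># S \<and> l \<in> lhs e \<and>
         comb_exhaust (image_mset (eliminate l e) (S - {#e#})) S3 \<and>
         st' = (S3, Suc c)))"

definition run_marks_k :: "equation list \<Rightarrow> nat \<Rightarrow> bool" where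
  "run_marks_k S k \<longleftrightarrow> (\<exists>S'. (alg_step k)\<^sup>*\<^sup>* (mset S, 0) (S', k))"

end

theory Submission
  imports Defs
begin


lemma bit_add_self: "(x::bit) + x = 0"
  by (cases x) (simp_all flip: one_add_one)

lemma sum_symdiff:
  fixes z :: "nat \<Rightarrow> bit"
  assumes "finite A" "finite B"
  shows "sum z (symdiff A B) = sum z A + sum z B"
proof -
  have d: "(A - B) \<inter> (B - A) = {}" by blast
  have "sum z (symdiff A B) = sum z (A - B) + sum z (B - A)"
    unfolding symdiff_def using assms d by (simp add: sum.union_disjoint)
  moreover have "sum z A = sum z (A - B) + sum z (A \<inter> B)"
    using assms by (metis Diff_Diff_Int Diff_subset finite_Diff sum.subset_diff inf_le1 add.commute)
  moreover have "sum z B = sum z (B - A) + sum z (A \<inter> B)"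
    using assms by (metis Diff_Diff_Int Diff_subset finite_Diff sum.subset_diff inf_le2 add.commute inf_commute)
  ultimately show ?thesis
    by (metis (no_types, lifting) add.assoc add.commute add.left_commute add_0_right bit_add_self)
qed

definition ex1 :: "(nat \<Rightarrow> bit) \<Rightarrow> equation \<Rightarrow> int" where
  "ex1 z e = (if satisfies z e then int (wt e) else - int (wt e))"

definition exc :: "(nat \<Rightarrow> bit) \<Rightarrow> equation multiset \<Rightarrow> int" where
  "exc z T = sum_mset (image_mset (ex1 z) T)"

lemma exc_union: "exc z (A + B) = exc z A + exc z B"
  by (simp add: exc_def)

lemma exc_pair: "exc z {#e1, e2#} = ex1 z e1 + ex1 z e2"
  by (simp add: exc_def)

lemma combine_exc:
  assumes "lhs e1 = lhs e2"
  shows "exc z (combine e1 e2) = ex1 z e1 + ex1 z e2"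
  using assms
  by (cases "rhs e1"; cases "rhs e2")
     (auto simp: combine_def exc_def ex1_def satisfies_def lhs_def rhs_def wt_def of_nat_diff)

lemma comb_step_exc: "comb_step S S' \<Longrightarrow> exc z S' = exc z S"
proof -
  assume "comb_step S S'"
  then obtain e1 e2 where s: "{#e1, e2#} \<subseteq># S" "lhs e1 = lhs e2" "S' = S - {#e1, e2#} + combine e1 e2"
    unfolding comb_step_def by blast
  have "S = (S - {#e1, e2#}) + {#e1, e2#}" using s(1) by (metis subset_mset.diff_add)
  then have "exc z S = exc z (S - {#e1, e2#}) + ex1 z e1 + ex1 z e2"
    by (metis exc_union exc_pair add.assoc)
  moreover have "exc z S' = exc z (S - {#e1, e2#}) + exc z (combine e1 e2)"
    using s(3) unfolding exc_def by simp
  ultimately show ?thesis using combine_exc[OF s(2)] by simp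
qed

lemma comb_steps_exc: "comb_step\<^sup>*\<^sup>* S S' \<Longrightarrow> exc z S' = exc z S"
  by (induction rule: rtranclp_induct) (metis comb_step_exc)+

lemma combine_elems: "e \<in># combine e1 e2 \<Longrightarrow> wt e1 > 0 \<Longrightarrow> lhs e = lhs e1 \<and> wt e > 0"
  by (auto simp: combine_def lhs_def wt_def rhs_def split: if_splits)

lemma combine_size: "size (combine e1 e2) \<le> 1"
  by (simp add: combine_def)

lemma comb_step_elems:
  assumes "comb_step S S'" "e \<in># S'" "\<forall>e\<in>#S. wt e > 0"
  shows "e \<in># S \<or> (\<exists>e1\<in>#S. lhs e = lhs e1 \<and> wt e > 0)"
proof -
  obtain e1 e2 where s: "{#e1, e2#} \<subseteq># S" "lhs e1 = lhs e2" "S' = S - {#e1, e2#} + combine e1 e2"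
    using assms(1) unfolding comb_step_def by blast
  have "e1 \<in># S" using s(1) by (meson mset_subset_eq_insertD)
  then show ?thesis using assms(2,3) s(3) combine_elems[of e e1 e2]
    by (metis in_diffD union_iff)
qed

lemma comb_step_size: "comb_step S S' \<Longrightarrow> size S' < size S"
proof -
  assume "comb_step S S'"
  then obtain e1 e2 where s: "{#e1, e2#} \<subseteq># S" "S' = S - {#e1, e2#} + combine e1 e2"
    unfolding comb_step_def by blast
  have "size S = size (S - {#e1, e2#}) + 2" using s(1)
    by (metis size_Diff_submset size_add_mset size_single add_2_eq_Suc' le_add_diff_inverse2 size_mset_mono Suc_1 one_add_one)
  then show ?thesis using s(2) combine_size[of e1 e2] by simp
qed

lemma comb_steps_size: "comb_step\<^sup>*\<^sup>* S S' \<Longrightarrow> size S' \<le> size S"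
  by (induction rule: rtranclp_induct) (auto dest: comb_step_size)

lemma comb_steps_pres:
  assumes "comb_step\<^sup>*\<^sup>* S S'" "\<forall>e\<in>#S. Q (lhs e) \<and> wt e > 0"
  shows "\<forall>e\<in>#S'. Q (lhs e) \<and> wt e > 0"
  using assms(1)
proof (induction rule: rtranclp_induct)
  case (step y z)
  show ?case
  proof
    fix e assume "e \<in># z"
    have P: "\<forall>e\<in>#y. Q (lhs e) \<and> wt e > 0" by fact
    from comb_step_elems[OF step(2) \<open>e \<in># z\<close>] P
    show "Q (lhs e) \<and> wt e > 0" by (metis (no_types, lifting))
  qed
qed (use assms(2) in simp)

lemma comb_exhaust_ex: "\<exists>S'. comb_exhaust S S'"
proof (induction "size S" arbitrary: S rule: less_induct)
  case less
  show ?case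
  proof (cases "\<exists>S''. comb_step S S''")
    case True
    then obtain S'' where "comb_step S S''" by blast
    with less comb_step_size obtain S' where "comb_exhaust S'' S'" by blast
    then show ?thesis using \<open>comb_step S S''\<close> unfolding comb_exhaust_def
      by (meson converse_rtranclp_into_rtranclp)
  next
    case False then show ?thesis unfolding comb_exhaust_def by blast
  qed
qed


definition dlhs :: "equation multiset \<Rightarrow> bool" where
  "dlhs T = (\<forall>e1 e2. {#e1, e2#} \<subseteq># T \<longrightarrow> lhs e1 \<noteq> lhs e2)"

definition inv_sys :: "equation multiset \<Rightarrow> bool" where
  "inv_sys T = (dlhs T \<and> (\<forall>e\<in>#T. lhs e \<noteq> {} \<and> finite (lhs e) \<and> wt e > 0))"

lemma exhaust_dlhs: "comb_exhaust S T \<Longrightarrow> dlhs T"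
  unfolding comb_exhaust_def dlhs_def comb_step_def by blast

lemma pair_sub: "e \<in># T \<Longrightarrow> e' \<in># T - {#e#} \<Longrightarrow> {#e, e'#} \<subseteq># T"
proof -
  assume a: "e \<in># T" "e' \<in># T - {#e#}"
  have "add_mset e {#e'#} \<subseteq># add_mset e (T - {#e#})"
    using a(2) by (simp add: mset_subset_eq_add_mset_cancel)
  then show ?thesis using a(1) by (simp add: insert_DiffM)
qed

lemma symdiff_empty: "symdiff A B = {} \<Longrightarrow> A = B"
  unfolding symdiff_def by blast

lemma key:
  assumes iv: "inv_sys T" and eT: "e \<in># T" and l: "l \<in> lhs e"
    and ex: "comb_exhaust (image_mset (eliminate l e) (T - {#e#})) T1"
  shows "inv_sys T1 \<and> size T1 < size T \<and> (\<forall>z1. \<exists>z. exc z T = int (wt e) + exc z1 T1)"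
proof -
  define M where "M = image_mset (eliminate l e) (T - {#e#})"
  have fe: "finite (lhs e)" using iv eT unfolding inv_sys_def by blast
  have Mq: "\<forall>x\<in>#M. (lhs x \<noteq> {} \<and> finite (lhs x) \<and> l \<notin> lhs x) \<and> wt x > 0"
  proof
    fix x assume "x \<in># M"
    then obtain e' where e': "e' \<in># T - {#e#}" "x = eliminate l e e'" unfolding M_def by auto
    have e'T: "e' \<in># T" using e' by (meson in_diffD)
    have ne: "lhs e \<noteq> lhs e'" using iv pair_sub[OF eT e'(1)] unfolding inv_sys_def dlhs_def by blast
    have p: "lhs e' \<noteq> {} \<and> finite (lhs e') \<and> wt e' > 0" using iv e'T unfolding inv_sys_def by blast
    show "(lhs x \<noteq> {} \<and> finite (lhs x) \<and> l \<notin> lhs x) \<and> wt x > 0"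
    proof (cases "l \<in> lhs e'")
      case True
      then show ?thesis using e'(2) p ne fe l symdiff_empty[of "lhs e" "lhs e'"]
        by (auto simp: eliminate_def lhs_def wt_def symdiff_def)
    next
      case False
      then show ?thesis using e'(2) p by (simp add: eliminate_def)
    qed
  qed
  have ex': "comb_exhaust M T1" using ex M_def by simp
  have T1q: "\<forall>x\<in>#T1. (lhs x \<noteq> {} \<and> finite (lhs x) \<and> l \<notin> lhs x) \<and> wt x > 0"
    using comb_steps_pres[of M T1 "\<lambda>A. A \<noteq> {} \<and> finite A \<and> l \<notin> A"] ex' Mq
    unfolding comb_exhaust_def by blast
  have inv1: "inv_sys T1" using T1q exhaust_dlhs[OF ex'] unfolding inv_sys_def by blast
  have sM: "size T1 \<le> size M" using ex' comb_steps_size unfolding comb_exhaust_def by blast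
  have "size T > 0" using eT by (metis empty_iff set_mset_empty size_eq_0_iff_empty gr0I)
  then have "size M < size T" using eT unfolding M_def by (simp add: size_Diff_singleton)
  then have sz: "size T1 < size T" using sM by linarith
  have exc: "\<exists>z. exc z T = int (wt e) + exc z1 T1" for z1
  proof -
    define z where "z = z1(l := rhs e + sum z1 (lhs e - {l}))"
    have zz1: "sum z A = sum z1 A" if "l \<notin> A" for A
      using that by (intro sum.cong) (auto simp: z_def)
    have se: "sum z (lhs e) = rhs e"
    proof -
      have "sum z (lhs e) = z l + sum z (lhs e - {l})" using fe l by (simp add: sum.remove)
      also have "... = rhs e + sum z1 (lhs e - {l}) + sum z1 (lhs e - {l})"
        using zz1[of "lhs e - {l}"] by (simp add: z_def)
      also have "... = rhs e" by (metis add.assoc bit_add_self add_0_right)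
      finally show ?thesis .
    qed
    have sat_e: "ex1 z e = int (wt e)" using se by (simp add: ex1_def satisfies_def)
    have elim: "ex1 z (eliminate l e e') = ex1 z e'" if "e' \<in># T - {#e#}" for e'
    proof (cases "l \<in> lhs e'")
      case True
      have fe': "finite (lhs e')" using iv that unfolding inv_sys_def by (meson in_diffD)
      have "satisfies z (eliminate l e e') \<longleftrightarrow> sum z (lhs e) + sum z (lhs e') = rhs e + rhs e'"
        using True sum_symdiff[OF fe fe', of z]
        by (simp add: eliminate_def satisfies_def lhs_def rhs_def)
      also have "... \<longleftrightarrow> satisfies z e'" by (simp only: satisfies_def se add_left_cancel)
      finally show ?thesis using True by (simp add: ex1_def eliminate_def wt_def)
    next
      case False then show ?thesis by (simp add: eliminate_def)
    qed
    have "exc z T = ex1 z e + exc z (T - {#e#})"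
      unfolding exc_def using eT by (metis image_mset_add_mset insert_DiffM sum_mset.insert)
    also have "exc z (T - {#e#}) = exc z M"
      unfolding exc_def M_def multiset.map_comp
      by (intro arg_cong[where f=sum_mset] image_mset_cong) (simp add: elim comp_def)
    also have "exc z M = exc z T1" using ex' comb_steps_exc unfolding comb_exhaust_def by metis
    also have "exc z T1 = exc z1 T1"
      unfolding exc_def
    proof (intro arg_cong[where f=sum_mset] image_mset_cong)
      fix x assume "x \<in># T1"
      then have "l \<notin> lhs x" using T1q by blast
      then show "ex1 z x = ex1 z1 x" using zz1 by (simp add: ex1_def satisfies_def)
    qed
    finally have "exc z T = int (wt e) + exc z1 T1" using sat_e by simp
    then show ?thesis by blast
  qed
  show ?thesis using inv1 sz exc by blast
qed

lemma base_ex: "inv_sys T \<Longrightarrow> \<exists>z. exc z T \<ge> 0"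
proof (induction "size T" arbitrary: T rule: less_induct)
  case less
  show ?case
  proof (cases "T = {#}")
    case True then show ?thesis by (simp add: exc_def)
  next
    case False
    then obtain e where eT: "e \<in># T" by blast
    then have "lhs e \<noteq> {}" using less.prems unfolding inv_sys_def by blast
    then obtain l where l: "l \<in> lhs e" by blast
    obtain T1 where T1: "comb_exhaust (image_mset (eliminate l e) (T - {#e#})) T1"
      using comb_exhaust_ex by blast
    from key[OF less.prems eT l T1] obtain z1 where "exc z1 T1 \<ge> 0"
      using less.hyps by blast
    moreover from key[OF less.prems eT l T1] obtain z where "exc z T = int (wt e) + exc z1 T1"
      by blast
    ultimately show ?thesis by (metis add_nonneg_nonneg of_nat_0_le_iff)
  qed
qed

lemma runs:
  assumes "(alg_step k)\<^sup>*\<^sup>* st st'"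
  shows "inv_sys (fst st) \<Longrightarrow> snd st \<le> snd st' \<and> (\<exists>z. exc z (fst st) \<ge> int (snd st') - int (snd st))"
  using assms
proof (induction rule: converse_rtranclp_induct)
  case base
  then show ?case using base_ex[of "fst st'"] by auto
next
  case (step y y')
  obtain l e S3 where s: "e \<in># fst y" "l \<in> lhs e"
     "comb_exhaust (image_mset (eliminate l e) (fst y - {#e#})) S3" "y' = (S3, Suc (snd y))"
    using step.hyps(1) unfolding alg_step_def Let_def by blast
  note K = key[OF step.prems s(1,2,3)]
  then have "inv_sys (fst y')" using s(4) by simp
  then obtain z1 where z1: "snd y' \<le> snd st'" "exc z1 (fst y') \<ge> int (snd st') - int (snd y')"
    using step.IH by blast
  obtain z where "exc z (fst y) = int (wt e) + exc z1 S3" using K by blast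
  moreover have "wt e > 0" using step.prems s(1) unfolding inv_sys_def by blast
  ultimately have "int (snd st') - int (snd y) \<le> exc z (fst y)" using z1 s(4) by simp
  then show ?case using z1 s(4) by auto
qed

lemma exc_list: "exc z (mset S) = 2 * int (sat_weight z S) - int (total_weight S)"
  by (induction S) (auto simp: exc_def ex1_def sat_weight_def total_weight_def)

theorem lemma2:
  fixes r :: "nat \<Rightarrow> nat" and n k :: nat and S :: "equation list"
  assumes "lin2_instance r n S"
    and "\<forall>j<length S. \<forall>p<length S. j \<noteq> p \<longrightarrow> lhs (S ! j) \<noteq> lhs (S ! p)"
    and "run_marks_k S k"
  shows "yes_instance S k"
proof -
  have dist: "distinct S" using assms(2) unfolding distinct_conv_nth by metis
  have dl: "dlhs (mset S)" unfolding dlhs_def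
  proof (intro allI impI)
    fix e1 e2 assume sub: "{#e1, e2#} \<subseteq># mset S"
    have e1: "e1 \<in> set S" using sub by (metis mset_subset_eq_insertD set_mset_mset)
    have e2: "e2 \<in> set S" using sub
      by (metis add_mset_commute mset_subset_eq_insertD set_mset_mset)
    show "lhs e1 \<noteq> lhs e2"
    proof (cases "e1 = e2")
      case True
      have "count {#e1, e2#} e1 \<le> count (mset S) e1" using sub by (rule mset_subset_eq_count)
      moreover have "count (mset S) e1 \<le> 1" using dist by (metis distinct_count_atmost_1 order_refl zero_le_one)
      ultimately show ?thesis using True by simp
    next
      case False
      obtain i where i: "i < length S" "S ! i = e1" using e1 by (metis in_set_conv_nth)
      obtain j where j: "j < length S" "S ! j = e2" using e2 by (metis in_set_conv_nth)
      have "i \<noteq> j" using i j False by blast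
      then show ?thesis using assms(2) i j by blast
    qed
  qed
  have "inv_sys (mset S)" using dl assms(1) unfolding inv_sys_def lin2_instance_def
    using finite_subset by fastforce
  moreover obtain S' where "(alg_step k)\<^sup>*\<^sup>* (mset S, 0) (S', k)"
    using assms(3) unfolding run_marks_k_def by blast
  ultimately obtain z where "exc z (mset S) \<ge> int k"
    using runs[of k "(mset S, 0)" "(S', k)"] by auto
  then have "2 * int (sat_weight z S) - int (total_weight S) \<ge> int k" by (simp add: exc_list)
  then have "k + total_weight S \<le> 2 * sat_weight z S" by linarith
  then have "real k + real (total_weight S) \<le> 2 * real (sat_weight z S)"
    by (metis of_nat_add of_nat_le_iff of_nat_mult of_nat_numeral)
  then have "real (sat_weight z S) \<ge> (real (total_weight S) + real k) / 2" by (simp add: field_simps)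
  then show ?thesis unfolding yes_instance_def by blast
qed

end
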